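(* For no natural number $k\ge 0$ is there a one-tape infinite time Turing machine with a $k$-cell scratch pad that computes the stretch function $s(a)=\langle a_0\,0\,0\,a_1\,0\,0\,a_2\,0\,0\cdots\rangle$ in such a way that on every input $a\in\mathbb{R}$ it halts within at most $\omega$ steps.
   Context: $\mathbb{R}=2^\omega$; $a_i$ is the $i$-th digit of $a$. A one-tape infinite time Turing machine with a $k$-cell scratch pad has a single tape with cells indexed by $\{-k,\dots,-1\}\cup\omega$ holding values in $\{0,1\}$, the cells $-k,\dots,-1$ forming the scratch pad (for $k=0$ this is an ordinary one-tape machine), one head, and a program with finitely many states including start, halt and a limit state. It operates as an ordinary Turing machine at successor stages (moving left from the leftmost cell leaves the head in place); at limit stages the head returns to the leftmost cell, the state becomes the limit state, and each cell takes the $\limsup$ of its earlier values. The input $a$ is written on cells $0,1,2,\dots$ with the pad initially $0$, and upon halting the output is the contents of cells $0,1,2,\dots$. *)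

theory Defs
  imports Main
begin

datatype move = MoveL | MoveR

text \<open>A program: states are the naturals below num_states; transition function
  delta q b = (new state, symbol written, move).\<close>
record program =
  num_states :: nat
  start_st :: nat
  halt_st :: nat
  limit_st :: nat
  delta :: "nat \<Rightarrow> bool \<Rightarrow> nat \<times> bool \<times> move"

definition wf_program :: "program \<Rightarrow> bool" where
  "wf_program P \<longleftrightarrow> start_st P < num_states P \<and> halt_st P < num_states P \<and>
     limit_st P < num_states P \<and>
     (\<forall>q b. q < num_states P \<longrightarrow> fst (delta P q b) < num_states P)"

text \<open>Configuration: state, head position, tape. Cells are integers;
  with a k-cell scratch pad the used cells are -k,...,-1,0,1,2,...\<close>
type_synonym config = "nat \<times> int \<times> (int \<Rightarrow> bool)"

definition step :: "nat \<Rightarrow> program \<Rightarrow> config \<Rightarrow> config" where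
  "step k P c = (case c of (q, h, t) \<Rightarrow>
     if q = halt_st P then c else
     (case delta P q (t h) of (q', b, m) \<Rightarrow>
        (q', (case m of MoveL \<Rightarrow> max (- int k) (h - 1) | MoveR \<Rightarrow> h + 1), t(h := b))))"

definition init_config :: "nat \<Rightarrow> program \<Rightarrow> (nat \<Rightarrow> bool) \<Rightarrow> config" where
  "init_config k P a = (start_st P, - int k, (\<lambda>i. if i \<ge> 0 then a (nat i) else False))"

definition run :: "nat \<Rightarrow> program \<Rightarrow> (nat \<Rightarrow> bool) \<Rightarrow> nat \<Rightarrow> config" where
  "run k P a n = (step k P ^^ n) (init_config k P a)"

definition state_at :: "nat \<Rightarrow> program \<Rightarrow> (nat \<Rightarrow> bool) \<Rightarrow> nat \<Rightarrow> nat" where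
  "state_at k P a n = fst (run k P a n)"

definition tape_at :: "nat \<Rightarrow> program \<Rightarrow> (nat \<Rightarrow> bool) \<Rightarrow> nat \<Rightarrow> int \<Rightarrow> bool" where
  "tape_at k P a n = snd (snd (run k P a n))"

definition tape_omega :: "nat \<Rightarrow> program \<Rightarrow> (nat \<Rightarrow> bool) \<Rightarrow> int \<Rightarrow> bool" where
  "tape_omega k P a i \<longleftrightarrow> (\<forall>m. \<exists>n\<ge>m. tape_at k P a n i)"

definition output_of :: "(int \<Rightarrow> bool) \<Rightarrow> nat \<Rightarrow> bool" where
  "output_of t = (\<lambda>i. t (int i))"

text \<open>At stage omega the state is the limit state, so halting at omega means
  no halt at a finite stage and the limit state is the halt state.\<close>
definition halts_within_omega_with ::
  "nat \<Rightarrow> program \<Rightarrow> (nat \<Rightarrow> bool) \<Rightarrow> (nat \<Rightarrow> bool) \<Rightarrow> bool" where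
  "halts_within_omega_with k P a b \<longleftrightarrow>
     (\<exists>n. state_at k P a n = halt_st P \<and> output_of (tape_at k P a n) = b) \<or>
     ((\<forall>n. state_at k P a n \<noteq> halt_st P) \<and> limit_st P = halt_st P \<and>
        output_of (tape_omega k P a) = b)"

definition stretch :: "(nat \<Rightarrow> bool) \<Rightarrow> nat \<Rightarrow> bool" where
  "stretch a i \<longleftrightarrow> i mod 3 = 0 \<and> a (i div 3)"

end

theory Submission
  imports Defs
begin

definition hd_at :: "nat \<Rightarrow> program \<Rightarrow> (nat \<Rightarrow> bool) \<Rightarrow> nat \<Rightarrow> int" where
  "hd_at k P a n = fst (snd (run k P a n))"

lemma run_eq: "run k P a n = (state_at k P a n, hd_at k P a n, tape_at k P a n)"
  by (simp add: state_at_def hd_at_def tape_at_def)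

lemma run_Suc: "run k P a (Suc n) = step k P (run k P a n)"
  by (simp add: run_def)

lemma run_add: "run k P a (m + n) = (step k P ^^ n) (run k P a m)"
  unfolding run_def by (metis add.commute comp_apply funpow_add)

lemma run_0: "run k P a 0 = init_config k P a"
  by (simp add: run_def)

lemma step_tuple: "step k P (q,h,t) = (if q = halt_st P then (q,h,t) else
   (fst (delta P q (t h)), (case snd (snd (delta P q (t h))) of
      MoveL \<Rightarrow> max (- int k) (h - 1) | MoveR \<Rightarrow> h + 1), t(h := fst (snd (delta P q (t h))))))"
  by (simp add: step_def split: prod.split)

lemma run_Suc': "run k P a (Suc n) = step k P (state_at k P a n, hd_at k P a n, tape_at k P a n)"
  using run_Suc run_eq by metis

lemma state_Suc: "state_at k P a (Suc n) = (if state_at k P a n = halt_st P then state_at k P a n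
   else fst (delta P (state_at k P a n) (tape_at k P a n (hd_at k P a n))))"
  by (subst state_at_def, subst run_Suc', simp only: step_tuple, simp)

lemma hd_Suc: "hd_at k P a (Suc n) = (if state_at k P a n = halt_st P then hd_at k P a n
   else (case snd (snd (delta P (state_at k P a n) (tape_at k P a n (hd_at k P a n)))) of
      MoveL \<Rightarrow> max (- int k) (hd_at k P a n - 1) | MoveR \<Rightarrow> hd_at k P a n + 1))"
  by (subst hd_at_def, subst run_Suc', simp only: step_tuple, simp)

lemma tape_Suc: "tape_at k P a (Suc n) = (if state_at k P a n = halt_st P then tape_at k P a n
   else (tape_at k P a n)(hd_at k P a n := fst (snd (delta P (state_at k P a n) (tape_at k P a n (hd_at k P a n))))))"
  by (subst tape_at_def, subst run_Suc', simp only: step_tuple, simp)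

lemma init_vals: "state_at k P a 0 = start_st P" "hd_at k P a 0 = - int k"
  "tape_at k P a 0 = (\<lambda>i. if i \<ge> 0 then a (nat i) else False)"
  by (simp_all add: state_at_def hd_at_def tape_at_def run_0 init_config_def)

lemma hd_bounds: "- int k \<le> hd_at k P a n \<and> hd_at k P a n \<le> - int k + int n"
  by (induction n) (auto simp: init_vals hd_Suc split: move.split)

lemma hd_Suc_le: "hd_at k P a (Suc n) \<le> hd_at k P a n + 1"
  using hd_bounds[of k P a n] by (auto simp: hd_Suc split: move.split)

lemma tape_Suc_other: "x \<noteq> hd_at k P a n \<Longrightarrow> tape_at k P a (Suc n) x = tape_at k P a n x"
  by (simp add: tape_Suc)

lemma tape_unchanged: "(\<And>s. t0 \<le> s \<Longrightarrow> s < t0 + d \<Longrightarrow> hd_at k P a s \<noteq> x) \<Longrightarrow>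
   tape_at k P a (t0 + d) x = tape_at k P a t0 x"
proof (induction d)
  case 0 then show ?case by simp
next
  case (Suc d)
  have "hd_at k P a (t0 + d) \<noteq> x" using Suc.prems by simp
  then have "tape_at k P a (Suc (t0 + d)) x = tape_at k P a (t0 + d) x" using tape_Suc_other by metis
  also have "\<dots> = tape_at k P a t0 x" using Suc by simp
  finally show ?case by simp
qed

lemma state_wf: "wf_program P \<Longrightarrow> state_at k P a n < num_states P"
  by (induction n) (auto simp: init_vals state_Suc wf_program_def)

lemma halted_stays: "state_at k P a n = halt_st P \<Longrightarrow> run k P a (n + m) = run k P a n"
proof (induction m)
  case 0 then show ?case by simp
next
  case (Suc m)
  have "run k P a (n + Suc m) = step k P (run k P a (n + m))" by (simp add: run_Suc)
  also have "\<dots> = step k P (run k P a n)" using Suc by simp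
  also have "\<dots> = run k P a n" using Suc.prems by (subst (1 2) run_eq) (simp only: step_tuple, simp)
  finally show ?case .
qed

definition BadP :: "((nat \<Rightarrow> bool) \<Rightarrow> nat \<Rightarrow> bool) \<Rightarrow> nat \<Rightarrow> (nat \<Rightarrow> bool) \<Rightarrow> bool" where
  "BadP R m g \<longleftrightarrow> (\<forall>L. \<exists>a. (\<forall>i<m. a i = g i) \<and> (\<forall>t\<le>L. \<not> R a t))"

primrec kpath :: "((nat \<Rightarrow> bool) \<Rightarrow> nat \<Rightarrow> bool) \<Rightarrow> nat \<Rightarrow> nat \<Rightarrow> bool" where
  "kpath R 0 = (\<lambda>_. False)"
| "kpath R (Suc m) = (if BadP R (Suc m) ((kpath R m)(m := False))
     then (kpath R m)(m := False) else (kpath R m)(m := True))"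

lemma BadP_ext:
  assumes "BadP R m g"
  shows "BadP R (Suc m) (g(m := False)) \<or> BadP R (Suc m) (g(m := True))"
proof (rule ccontr)
  assume "\<not> ?thesis"
  then have n0: "\<not> BadP R (Suc m) (g(m := False))" and n1: "\<not> BadP R (Suc m) (g(m := True))" by simp_all
  from n0 obtain L0 where
    L0: "\<not> (\<exists>a. (\<forall>i<Suc m. a i = (g(m := False)) i) \<and> (\<forall>t\<le>L0. \<not> R a t))"
    unfolding BadP_def by blast
  from n1 obtain L1 where
    L1: "\<not> (\<exists>a. (\<forall>i<Suc m. a i = (g(m := True)) i) \<and> (\<forall>t\<le>L1. \<not> R a t))"
    unfolding BadP_def by blast
  obtain a where a1: "\<forall>i<m. a i = g i" and a2: "\<forall>t\<le>max L0 L1. \<not> R a t"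
    using assms unfolding BadP_def by blast
  have b0: "\<forall>t\<le>L0. \<not> R a t" using a2 by simp
  have b1: "\<forall>t\<le>L1. \<not> R a t" using a2 by simp
  show False
  proof (cases "a m")
    case True
    have "\<forall>i<Suc m. a i = (g(m := True)) i"
    proof (intro allI impI)
      fix i assume "i < Suc m"
      then show "a i = (g(m := True)) i" using a1 True by (cases "i = m") auto
    qed
    then show False using L1 b1 by blast
  next
    case False
    have "\<forall>i<Suc m. a i = (g(m := False)) i"
    proof (intro allI impI)
      fix i assume "i < Suc m"
      then show "a i = (g(m := False)) i" using a1 False by (cases "i = m") auto
    qed
    then show False using L0 b0 by blast
  qed
qed

lemma kpath_bad: "BadP R 0 (\<lambda>_. False) \<Longrightarrow> BadP R m (kpath R m)"
proof (induction m)
  case 0 then show ?case by (simp only: kpath.simps)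
next
  case (Suc m)
  then have ih: "BadP R m (kpath R m)" by blast
  show ?case
  proof (cases "BadP R (Suc m) ((kpath R m)(m := False))")
    case True
    then have "kpath R (Suc m) = (kpath R m)(m := False)" by (simp only: kpath.simps if_True)
    then show ?thesis using True by (simp only:)
  next
    case False
    then have "kpath R (Suc m) = (kpath R m)(m := True)" by (simp only: kpath.simps if_False)
    moreover have "BadP R (Suc m) ((kpath R m)(m := True))" using BadP_ext[OF ih] False by blast
    ultimately show ?thesis by (simp only:)
  qed
qed

lemma kp_other: "i \<noteq> m \<Longrightarrow> kpath R (Suc m) i = kpath R m i"
  by (simp only: kpath.simps) (simp split: if_split)

lemma kpath_agree: "i < m \<Longrightarrow> kpath R m i = kpath R (Suc i) i"
proof (induction m)
  case 0 then show ?case by simp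
next
  case (Suc m)
  show ?case
  proof (cases "i = m")
    case True then show ?thesis by (simp only:)
  next
    case False
    then have "i < m" using Suc.prems by simp
    have ih: "kpath R m i = kpath R (Suc i) i" using Suc.IH \<open>i < m\<close> by blast
    have "kpath R (Suc m) i = kpath R m i" using False by (rule kp_other)
    then show ?thesis using ih by (rule trans)
  qed
qed

lemma konig:
  fixes R :: "(nat \<Rightarrow> bool) \<Rightarrow> nat \<Rightarrow> bool"
  assumes loc: "\<And>a b t. (\<And>i. i < t + M \<Longrightarrow> a i = b i) \<Longrightarrow> R a t = R b t"
    and ex: "\<And>a. \<exists>t. R a t"
  shows "\<exists>L. \<forall>a. \<exists>t\<le>L. R a t"
proof (rule ccontr)
  assume A: "\<not> (\<exists>L. \<forall>a. \<exists>t\<le>L. R a t)"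
  have "BadP R 0 (\<lambda>_. False)" unfolding BadP_def
  proof
    fix L
    from A obtain a where "\<not> (\<exists>t\<le>L. R a t)" by blast
    then show "\<exists>a. (\<forall>i<0. a i = False) \<and> (\<forall>t\<le>L. \<not> R a t)" by blast
  qed
  then have bad: "BadP R m (kpath R m)" for m by (rule kpath_bad)
  define a where "a i = kpath R (Suc i) i" for i
  obtain t where t: "R a t" using ex by blast
  from bad[of "t + M"] obtain b where b1: "\<forall>i<t + M. b i = kpath R (t + M) i"
     and b2: "\<forall>t'\<le>t. \<not> R b t'"
    unfolding BadP_def by blast
  have "R a t = R b t"
  proof (rule loc)
    fix i assume i: "i < t + M"
    have "b i = kpath R (t + M) i" using b1 i by blast
    also have "\<dots> = kpath R (Suc i) i" using kpath_agree[OF i] .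
    also have "\<dots> = a i" unfolding a_def ..
    finally show "a i = b i" by (rule sym)
  qed
  moreover have "\<not> R b t" using b2 by blast
  ultimately show False using t by blast
qed

lemma local_run:
  assumes ab: "\<forall>i<N. a i = b i"
  shows "t \<le> N \<Longrightarrow> state_at k P a t = state_at k P b t \<and> hd_at k P a t = hd_at k P b t \<and>
     (\<forall>x < int N. tape_at k P a t x = tape_at k P b t x)"
proof (induction t)
  case 0
  show ?case using ab by (auto simp: init_vals)
next
  case (Suc t)
  then have IH: "state_at k P a t = state_at k P b t" "hd_at k P a t = hd_at k P b t"
     "\<forall>x < int N. tape_at k P a t x = tape_at k P b t x" by auto
  have "hd_at k P a t < int N" using hd_bounds[of k P a t] Suc.prems by linarith
  then have rd: "tape_at k P a t (hd_at k P a t) = tape_at k P b t (hd_at k P b t)"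
    using IH by simp
  show ?case
  proof (intro conjI allI impI)
    show "state_at k P a (Suc t) = state_at k P b (Suc t)"
      using IH rd by (simp add: state_Suc)
    show "hd_at k P a (Suc t) = hd_at k P b (Suc t)"
      using IH rd by (simp add: hd_Suc split: move.split)
    fix x :: int assume "x < int N"
    then show "tape_at k P a (Suc t) x = tape_at k P b (Suc t) x"
      using IH rd by (simp add: tape_Suc)
  qed
qed

lemma output_halted:
  assumes hw: "halts_within_omega_with k P a out" and h: "state_at k P a n = halt_st P"
  shows "out = output_of (tape_at k P a n)"
proof -
  from hw h obtain n' where n': "state_at k P a n' = halt_st P" "output_of (tape_at k P a n') = out"
    unfolding halts_within_omega_with_def by blast
  have "run k P a (n + (n' - n)) = run k P a n" using halted_stays[OF h] by blast
  moreover have "run k P a (n' + (n - n')) = run k P a n'" using halted_stays[OF n'(1)] by blast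
  ultimately have "run k P a n = run k P a n'"
    by (metis le_add_diff_inverse le_add_diff_inverse2 nat_le_linear)
  then show ?thesis using n' by (simp add: tape_at_def)
qed

lemma same_config_output_aux:
  assumes eq: "run k P a T = run k P b T'"
    and ha: "halts_within_omega_with k P a oa" and hb: "halts_within_omega_with k P b ob"
    and h: "state_at k P a n = halt_st P"
  shows "oa = ob"
proof -
  have sh: "run k P a (T + m) = run k P b (T' + m)" for m using eq by (simp add: run_add)
  have "run k P a (n + T) = run k P a n" using halted_stays[OF h] by blast
  then have ha2: "state_at k P a (T + n) = halt_st P" using h by (simp add: state_at_def add.commute)
  then have hb2: "state_at k P b (T' + n) = halt_st P" using sh[of n] by (simp add: state_at_def)
  have "oa = output_of (tape_at k P a (T + n))" by (rule output_halted[OF ha ha2])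
  also have "\<dots> = output_of (tape_at k P b (T' + n))" using sh[of n] by (simp add: tape_at_def)
  also have "\<dots> = ob" by (rule output_halted[OF hb hb2, symmetric])
  finally show ?thesis .
qed

lemma omega_shift: "tape_omega k P a i \<longleftrightarrow> (\<forall>m. \<exists>n\<ge>m. tape_at k P a (T + n) i)"
  unfolding tape_omega_def
proof
  assume A: "\<forall>m. \<exists>n\<ge>m. tape_at k P a n i"
  show "\<forall>m. \<exists>n\<ge>m. tape_at k P a (T + n) i"
  proof
    fix m obtain n where "n \<ge> T + m" "tape_at k P a n i" using A by blast
    then show "\<exists>n\<ge>m. tape_at k P a (T + n) i"
      by (intro exI[of _ "n - T"]) auto
  qed
next
  assume A: "\<forall>m. \<exists>n\<ge>m. tape_at k P a (T + n) i"
  show "\<forall>m. \<exists>n\<ge>m. tape_at k P a n i"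
  proof
    fix m obtain n where "n \<ge> m" "tape_at k P a (T + n) i" using A by blast
    then show "\<exists>n\<ge>m. tape_at k P a n i"
      by (intro exI[of _ "T + n"]) auto
  qed
qed

lemma same_config_output:
  assumes eq: "run k P a T = run k P b T'"
    and ha: "halts_within_omega_with k P a oa" and hb: "halts_within_omega_with k P b ob"
  shows "oa = ob"
proof (cases "\<exists>n. state_at k P a n = halt_st P")
  case True
  then show ?thesis using same_config_output_aux[OF eq ha hb] by blast
next
  case F1: False
  show ?thesis
  proof (cases "\<exists>n. state_at k P b n = halt_st P")
    case True
    then show ?thesis using same_config_output_aux[OF eq[symmetric] hb ha] by metis
  next
    case False
    have sh: "run k P a (T + m) = run k P b (T' + m)" for m using eq by (simp add: run_add)
    have oa: "oa = output_of (tape_omega k P a)" using ha F1 unfolding halts_within_omega_with_def by blast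
    have ob: "ob = output_of (tape_omega k P b)" using hb False unfolding halts_within_omega_with_def by blast
    have "tape_omega k P a = tape_omega k P b"
    proof
      fix i
      show "tape_omega k P a i = tape_omega k P b i"
        using omega_shift[of k P a i T] omega_shift[of k P b i T'] sh
        by (simp add: tape_at_def)
    qed
    then show ?thesis using oa ob by simp
  qed
qed

definition Kset :: "nat \<Rightarrow> nat set" where
  "Kset n = (\<lambda>j. 3*j+1) ` {..<n} \<union> (\<lambda>j. 3*j+2) ` {..<n}"

lemma Kset_facts: "x \<in> Kset n \<Longrightarrow> x < 3*n \<and> \<not> stretch a x"
  unfolding Kset_def stretch_def by auto presburger+

lemma Kset_finite: "finite (Kset n)" unfolding Kset_def by simp

lemma Kset_card: "card (Kset n) = 2 * n"
proof -
  have d: "(\<lambda>j. 3*j+1) ` {..<n} \<inter> (\<lambda>j. 3*j+2) ` {..<n} = {}" by auto presburger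
  have "card (Kset n) = card ((\<lambda>j. 3*j+1) ` {..<n}) + card ((\<lambda>j. (3::nat)*j+2) ` {..<n})"
    unfolding Kset_def by (rule card_Un_disjoint) (use d in auto)
  also have "\<dots> = n + n" by (subst card_image, simp add: inj_on_def)+ simp
  finally show ?thesis by simp
qed

definition Stop :: "nat \<Rightarrow> program \<Rightarrow> nat \<Rightarrow> (nat \<Rightarrow> bool) \<Rightarrow> nat \<Rightarrow> bool" where
  "Stop k P n a t \<longleftrightarrow> (state_at k P a t = halt_st P \<or> hd_at k P a t \<le> int (3*n+1)) \<and>
     (\<forall>x\<in>Kset n. \<not> tape_at k P a t (int x))"

lemma Stop_exists:
  assumes hw: "halts_within_omega_with k P a (stretch a)"
  shows "\<exists>t. Stop k P n a t"
proof (cases "\<exists>m. state_at k P a m = halt_st P \<and> output_of (tape_at k P a m) = stretch a")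
  case True
  then obtain m where m: "state_at k P a m = halt_st P" "output_of (tape_at k P a m) = stretch a" by blast
  have "\<forall>x\<in>Kset n. \<not> tape_at k P a m (int x)"
  proof
    fix x assume "x \<in> Kset n"
    then have "\<not> stretch a x" using Kset_facts by blast
    then show "\<not> tape_at k P a m (int x)" using m(2) unfolding output_of_def by metis
  qed
  then show ?thesis using m unfolding Stop_def by blast
next
  case False
  then have om: "output_of (tape_omega k P a) = stretch a"
    using hw unfolding halts_within_omega_with_def by blast
  have ev: "\<forall>x\<in>Kset n. eventually (\<lambda>t. \<not> tape_at k P a t (int x)) sequentially"
  proof
    fix x assume "x \<in> Kset n"
    then have "\<not> stretch a x" using Kset_facts by blast
    then have "\<not> tape_omega k P a (int x)" using om unfolding output_of_def by metis
    then obtain m where "\<forall>t\<ge>m. \<not> tape_at k P a t (int x)" unfolding tape_omega_def by blast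
    then show "eventually (\<lambda>t. \<not> tape_at k P a t (int x)) sequentially"
      unfolding eventually_sequentially by blast
  qed
  have "eventually (\<lambda>t. \<forall>x\<in>Kset n. \<not> tape_at k P a t (int x)) sequentially"
    using eventually_ball_finite[OF Kset_finite ev] by simp
  then obtain S where S: "\<And>t. t \<ge> S \<Longrightarrow> \<forall>x\<in>Kset n. \<not> tape_at k P a t (int x)"
    unfolding eventually_sequentially by blast
  show ?thesis
  proof (cases "\<exists>t\<ge>S. hd_at k P a t \<le> int (3*n)")
    case True
    then obtain t where "t \<ge> S" "hd_at k P a t \<le> int (3*n)" by blast
    then show ?thesis using S unfolding Stop_def by force
  next
    case False
    define U where "U = {t. t \<le> S \<and> hd_at k P a t \<le> int (3*n)}"
    have "0 \<in> U" unfolding U_def using init_vals(2)[of k P a] by simp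
    have finU: "finite U" unfolding U_def by simp
    define u where "u = Max U"
    have uU: "u \<in> U" unfolding u_def using finU \<open>0 \<in> U\<close> Max_in by blast
    have after: "hd_at k P a s > int (3*n)" if "s > u" for s
    proof (cases "s \<le> S")
      case True
      then have "s \<notin> U" using that finU u_def Max_ge by (metis not_le)
      then show ?thesis using True unfolding U_def by auto
    next
      case False
      then have "s \<ge> S" by simp
      then show ?thesis using \<open>\<not> (\<exists>t\<ge>S. hd_at k P a t \<le> int (3*n))\<close> by force
    qed
    have h1: "hd_at k P a (Suc u) \<le> int (3*n+1)"
      using hd_Suc_le[of k P a u] uU unfolding U_def by simp
    have cells: "\<forall>x\<in>Kset n. \<not> tape_at k P a (Suc u) (int x)"
    proof
      fix x assume xK: "x \<in> Kset n"
      then have "x < 3*n" using Kset_facts by blast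
      have "tape_at k P a (Suc u + S) (int x) = tape_at k P a (Suc u) (int x)"
      proof (rule tape_unchanged)
        fix s assume "Suc u \<le> s" "s < Suc u + S"
        then have "hd_at k P a s > int (3*n)" using after by simp
        then show "hd_at k P a s \<noteq> int x" using \<open>x < 3*n\<close> by simp
      qed
      moreover have "\<not> tape_at k P a (Suc u + S) (int x)" using S xK by simp
      ultimately show "\<not> tape_at k P a (Suc u) (int x)" by simp
    qed
    show ?thesis using h1 cells unfolding Stop_def by blast
  qed
qed

lemma Stop_local:
  assumes "\<And>i. i < t + 3*n \<Longrightarrow> a i = b i"
  shows "Stop k P n a t = Stop k P n b t"
proof -
  have "state_at k P a t = state_at k P b t \<and> hd_at k P a t = hd_at k P b t \<and>
     (\<forall>x < int (t + 3*n). tape_at k P a t x = tape_at k P b t x)"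
    by (rule local_run) (use assms in auto)
  moreover have "\<forall>x\<in>Kset n. int x < int (t + 3*n)" using Kset_facts by fastforce
  ultimately show ?thesis unfolding Stop_def by auto
qed

lemma pow4: "3 \<le> n \<Longrightarrow> 4*n*n < (4::nat)^n"
proof (induction n rule: dec_induct)
  case base then show ?case by simp
next
  case (step n)
  have "4 * Suc n * Suc n = 4*n*n + 8*n + 4" by (simp add: algebra_simps)
  also have "\<dots> \<le> 4*(4*n*n)"
  proof -
    have "3*n \<le> n*n" using step.hyps by (simp add: mult_le_mono1)
    then show ?thesis using step.hyps by linarith
  qed
  also have "\<dots> < 4 * 4^n" using step.IH by simp
  finally show ?case by simp
qed

lemma arith_final: "c * (3*(c+k+3) + k + 3) < (4::nat)^(c+k+3)"
proof -
  define n where "n = c + k + 3"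
  have "c * (3*n + k + 3) \<le> n * (4*n)" by (rule mult_le_mono) (simp_all add: n_def)
  also have "\<dots> < 4^n" using pow4[of n] by (simp add: n_def algebra_simps)
  finally show ?thesis by (simp add: n_def)
qed

lemma tape_init_outside:
  assumes "x < - int k \<or> x \<ge> int t - int k"
  shows "tape_at k P a t x = tape_at k P a 0 x"
proof -
  have "tape_at k P a (0 + t) x = tape_at k P a 0 x"
  proof (rule tape_unchanged)
    fix s assume "0 \<le> s" "s < 0 + t"
    then show "hd_at k P a s \<noteq> x" using hd_bounds[of k P a s] assms by auto
  qed
  then show ?thesis by simp
qed

lemma stretch_inj: "stretch a = stretch b \<Longrightarrow> a = b"
proof
  fix j assume "stretch a = stretch b"
  then have "stretch a (3*j) = stretch b (3*j)" by simp
  then show "a j = b j" unfolding stretch_def by simp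
qed

theorem mainTheorem20:
  shows "\<not> (\<exists>(k::nat) P. wf_program P \<and>
            (\<forall>a. halts_within_omega_with k P a (stretch a)))"
proof
  assume "\<exists>(k::nat) P. wf_program P \<and> (\<forall>a. halts_within_omega_with k P a (stretch a))"
  then obtain k Pr where wf: "wf_program Pr" and hw: "\<And>a. halts_within_omega_with k Pr a (stretch a)"
    by blast
  define Q where "Q = num_states Pr"
  define n where "n = Q * 2^k + k + 3"
  have "\<exists>L. \<forall>a. \<exists>t\<le>L. Stop k Pr n a t"
  proof (rule konig[where M = "3*n"])
    fix a b :: "nat \<Rightarrow> bool" and t
    assume "\<And>i. i < t + 3*n \<Longrightarrow> a i = b i"
    then show "Stop k Pr n a t = Stop k Pr n b t" by (rule Stop_local)
  next
    fix a show "\<exists>t. Stop k Pr n a t" using Stop_exists[OF hw] .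
  qed
  then obtain L where L: "\<And>a. \<exists>t\<le>L. Stop k Pr n a t" by blast
  define N where "N = L + 3*n"
  define inp where "inp S = (\<lambda>i::nat. i \<in> S)" for S :: "nat set"
  define T where "T S = (LEAST t. Stop k Pr n (inp S) t)" for S
  have TS: "Stop k Pr n (inp S) (T S) \<and> T S \<le> L" for S
  proof -
    obtain t where t: "t \<le> L" "Stop k Pr n (inp S) t" using L by blast
    have "Stop k Pr n (inp S) (LEAST t. Stop k Pr n (inp S) t)" by (rule LeastI[of "Stop k Pr n (inp S)" t]) (rule t(2))
    moreover have "(LEAST t. Stop k Pr n (inp S) t) \<le> t" by (rule Least_le[of "Stop k Pr n (inp S)" t]) (rule t(2))
    ultimately show ?thesis unfolding T_def using t(1) by simp
  qed
  define st where "st S = state_at k Pr (inp S) (T S)" for S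
  define hp where "hp S = hd_at k Pr (inp S) (T S)" for S
  define tp where "tp S = tape_at k Pr (inp S) (T S)" for S
  define code where "code S = (st S, {x \<in> {- int k..<0}. tp S x},
      (if hp S \<le> int (3*n+1) then Some (hp S) else None), {x \<in> {..<N} - Kset n. tp S (int x)})" for S
  have tp_out: "\<not> tp S x" if "S \<subseteq> {..<N}" "x < - int k \<or> x \<ge> int N" for S x
  proof -
    have "T S \<le> N" using TS[of S] unfolding N_def by simp
    then have "x < - int k \<or> x \<ge> int (T S) - int k" using that(2) by auto
    then have "tp S x = tape_at k Pr (inp S) 0 x" unfolding tp_def by (rule tape_init_outside)
    then show ?thesis using that unfolding inp_def by (auto simp: init_vals)
  qed
  have tp_K: "\<not> tp S (int x)" if "x \<in> Kset n" for S x
    using TS[of S] that unfolding Stop_def tp_def by blast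
  have inj: "inj_on code (Pow {..<N})"
  proof (rule inj_onI)
    fix S1 S2 assume S1: "S1 \<in> Pow {..<N}" and S2: "S2 \<in> Pow {..<N}" and eq: "code S1 = code S2"
    have st_eq: "st S1 = st S2" using eq unfolding code_def by simp
    have pad: "{x \<in> {- int k..<0}. tp S1 x} = {x \<in> {- int k..<0}. tp S2 x}"
      using eq unfolding code_def by simp
    have hps: "(if hp S1 \<le> int (3*n+1) then Some (hp S1) else None) =
               (if hp S2 \<le> int (3*n+1) then Some (hp S2) else None)"
      using eq unfolding code_def by simp
    have body: "{x \<in> {..<N} - Kset n. tp S1 (int x)} = {x \<in> {..<N} - Kset n. tp S2 (int x)}"
      using eq unfolding code_def by simp
    have tp_eq: "tp S1 = tp S2"
    proof
      fix x :: int
      consider "x < - int k \<or> x \<ge> int N" | "- int k \<le> x \<and> x < 0" | "0 \<le> x \<and> x < int N" by linarith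
      then show "tp S1 x = tp S2 x"
      proof cases
        case 1
        have "\<not> tp S1 x" using tp_out[of S1 x] S1 1 by simp
        moreover have "\<not> tp S2 x" using tp_out[of S2 x] S2 1 by simp
        ultimately show ?thesis by simp
      next
        case 2
        have "x \<in> {x \<in> {- int k..<0}. tp S1 x} \<longleftrightarrow> x \<in> {x \<in> {- int k..<0}. tp S2 x}"
          using pad by (rule arg_cong)
        then show ?thesis using 2 by simp
      next
        case 3
        then obtain y where y: "x = int y" "y < N" by (metis nat_0_le nat_less_iff)
        show ?thesis
        proof (cases "y \<in> Kset n")
          case True
          have "\<not> tp S1 (int y)" "\<not> tp S2 (int y)" using tp_K True by blast+
          then show ?thesis using y by simp
        next
          case False
          then have "y \<in> {..<N} - Kset n" using y by simp
          moreover have "y \<in> {x \<in> {..<N} - Kset n. tp S1 (int x)} \<longleftrightarrow> y \<in> {x \<in> {..<N} - Kset n. tp S2 (int x)}"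
            using body by (rule arg_cong)
          ultimately show ?thesis using y by simp
        qed
      qed
    qed
    have out_eq: "stretch (inp S1) = stretch (inp S2)"
    proof (cases "hp S1 \<le> int (3*n+1)")
      case True
      then have "hp S2 \<le> int (3*n+1)" "hp S1 = hp S2" using hps by (auto split: if_splits)
      then have "run k Pr (inp S1) (T S1) = run k Pr (inp S2) (T S2)"
        using st_eq tp_eq run_eq unfolding st_def hp_def tp_def by metis
      then show ?thesis using same_config_output hw by blast
    next
      case False
      then have "\<not> hp S2 \<le> int (3*n+1)" using hps by (auto split: if_splits)
      then have h2: "state_at k Pr (inp S2) (T S2) = halt_st Pr"
        using TS[of S2] unfolding Stop_def hp_def by blast
      have h1: "state_at k Pr (inp S1) (T S1) = halt_st Pr"
        using TS[of S1] False unfolding Stop_def hp_def by blast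
      show ?thesis using output_halted[OF hw h1] output_halted[OF hw h2] tp_eq
        unfolding tp_def by simp
    qed
    then have "inp S1 = inp S2" by (rule stretch_inj)
    then show "S1 = S2" unfolding inp_def by (metis Collect_mem_eq)
  qed
  define Hs where "Hs = insert None (Some ` {- int k..int (3*n+1)})"
  define C where "C = {..<Q} \<times> Pow {- int k..<0} \<times> Hs \<times> Pow ({..<N} - Kset n)"
  have sub: "code ` Pow {..<N} \<subseteq> C"
  proof
    fix c assume "c \<in> code ` Pow {..<N}"
    then obtain S where c: "c = code S" by blast
    have "st S < Q" unfolding st_def Q_def using state_wf[OF wf] .
    moreover have "hp S \<ge> - int k" unfolding hp_def using hd_bounds by blast
    ultimately show "c \<in> C" unfolding c code_def C_def Hs_def by auto
  qed
  have finC: "finite C" unfolding C_def Hs_def by simp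
  have c1: "card (Pow {..<N}) \<le> card C" by (rule card_inj_on_le[OF inj sub finC])
  have c2: "card (Pow {..<N}) = 2^N" by (simp add: card_Pow)
  have c3: "card Hs \<le> 3*n + k + 3"
  proof -
    have "card Hs \<le> Suc (card (Some ` {- int k..int (3*n+1)}))" unfolding Hs_def by (rule card_insert_le_m1) simp_all
    also have "card (Some ` {- int k..int (3*n+1)}) \<le> card {- int k..int (3*n+1)}" by (rule card_image_le) simp
    also have "card {- int k..int (3*n+1)} = 3*n + k + 2" by simp
    finally show ?thesis by simp
  qed
  have c4: "card C = Q * 2^k * card Hs * 2^(N - 2*n)"
  proof -
    have "Kset n \<subseteq> {..<N}" using Kset_facts unfolding N_def by fastforce
    then have "card ({..<N} - Kset n) = N - 2*n" using Kset_card Kset_finite by (simp add: card_Diff_subset)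
    moreover have "card {- int k..<0} = k" by simp
    moreover have "card C = card {..<Q} * (card (Pow {- int k..<0}) * (card Hs * card (Pow ({..<N} - Kset n))))"
      unfolding C_def by (simp only: card_cartesian_product)
    ultimately show ?thesis by (simp add: card_Pow Kset_finite)
  qed
  have "(2::nat)^N \<le> Q * 2^k * card Hs * 2^(N - 2*n)" using c1 c2 c4 by simp
  also have "\<dots> \<le> Q * 2^k * (3*n + k + 3) * 2^(N - 2*n)"
    using c3 by (intro mult_le_mono1 mult_le_mono2)
  finally have A: "(2::nat)^N \<le> Q * 2^k * (3*n + k + 3) * 2^(N - 2*n)" .
  have B: "(2::nat)^N = 4^n * 2^(N - 2*n)"
  proof -
    have "N = 2*n + (N - 2*n)" unfolding N_def by simp
    then have "(2::nat)^N = 2^(2*n) * 2^(N - 2*n)" by (metis power_add)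
    then show ?thesis by (simp only: power_mult) simp
  qed
  have "4^n * 2^(N - 2*n) \<le> Q * 2^k * (3*n + k + 3) * (2::nat)^(N - 2*n)" using A B by (simp only:)
  then have D: "4^n \<le> Q * 2^k * (3*n + k + 3)" by (simp only: mult_le_cancel2) simp
  have E: "Q * 2^k * (3*n + k + 3) < 4^n" using arith_final[of "Q * 2^k" k] by (simp only: n_def)
  show False using leD[OF D] E by (rule notE)
qed

end
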